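(* Let $\mathcal{V}$ be a variety of $\Omega$-algebras and let $\sigma$ be an identity holding in $\mathcal{V}$. Then every algebra in the Mal'tsev product $\mathcal{V}\circ\mathcal{S}$ satisfies every identity in $\sigma^p$.
   Context: Standing conventions: $\Omega$-algebras are of a plural similarity type (no nullary operation symbols, at least one operation symbol of arity $\ge2$). $T_n$ is the set of $\Omega$-terms in $x_1,\dots,x_n$ in which all $n$ variables occur. An identity is regular if the same variables occur on both sides. $\mathcal{S}$ is the variety of $\Omega$-algebras satisfying all regular identities. $\mathcal{V}\circ\mathcal{S}$ is the class of $\Omega$-algebras $A$ having a congruence $\theta$ with $A/\theta\in\mathcal{S}$ and every $\theta$-class (a subalgebra) in $\mathcal{V}$. For an identity $\sigma$ of the form $u(y_1,\dots,y_n)=v(y_1,\dots,y_n)$ (variables of $u,v$ among $y_1,\dots,y_n$) and $m\ge1$, $\sigma^p_m$ is the set of all identities $u(r_1,\dots,r_n)=v(r_1,\dots,r_n)$ obtained by substituting $r_i(x_1,\dots,x_m)$ for $y_i$, where $r_1,\dots,r_n$ range over $T_m$; $\sigma^p=\bigcup_{m>0}\sigma^p_m$. *)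

theory Defs
  imports Main
begin

text \<open>A similarity type is given by a type 'f of operation symbols together with
  an arity function. Variables are natural numbers; x_i / y_i is variable i.\<close>

definition plural :: "('f \<Rightarrow> nat) \<Rightarrow> bool" where
  "plural arity \<longleftrightarrow> (\<forall>f. arity f \<ge> 1) \<and> (\<exists>f. arity f \<ge> 2)"

datatype ('f, 'v) trm = Var 'v | Fn 'f "('f, 'v) trm list"

fun wf_trm :: "('f \<Rightarrow> nat) \<Rightarrow> ('f, 'v) trm \<Rightarrow> bool" where
  "wf_trm arity (Var x) = True"
| "wf_trm arity (Fn f ts) = (length ts = arity f \<and> (\<forall>t\<in>set ts. wf_trm arity t))"

fun vars :: "('f, 'v) trm \<Rightarrow> 'v set" where
  "vars (Var x) = {x}"
| "vars (Fn f ts) = (\<Union>t\<in>set ts. vars t)"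

fun subst :: "('v \<Rightarrow> ('f, 'w) trm) \<Rightarrow> ('f, 'v) trm \<Rightarrow> ('f, 'w) trm" where
  "subst r (Var x) = r x"
| "subst r (Fn f ts) = Fn f (map (subst r) ts)"

record ('a, 'f) alg =
  carrier :: "'a set"
  ops :: "'f \<Rightarrow> 'a list \<Rightarrow> 'a"

fun eval :: "('f \<Rightarrow> 'a list \<Rightarrow> 'a) \<Rightarrow> ('v \<Rightarrow> 'a) \<Rightarrow> ('f, 'v) trm \<Rightarrow> 'a" where
  "eval op h (Var x) = h x"
| "eval op h (Fn f ts) = op f (map (eval op h) ts)"

definition is_algebra :: "('f \<Rightarrow> nat) \<Rightarrow> ('a, 'f) alg \<Rightarrow> bool" where
  "is_algebra arity A \<longleftrightarrow> carrier A \<noteq> {} \<and>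
     (\<forall>f xs. length xs = arity f \<and> set xs \<subseteq> carrier A \<longrightarrow> ops A f xs \<in> carrier A)"

type_synonym 'f identity = "('f, nat) trm \<times> ('f, nat) trm"

definition wf_identity :: "('f \<Rightarrow> nat) \<Rightarrow> 'f identity \<Rightarrow> bool" where
  "wf_identity arity e \<longleftrightarrow> wf_trm arity (fst e) \<and> wf_trm arity (snd e)"

definition regular :: "'f identity \<Rightarrow> bool" where
  "regular e \<longleftrightarrow> vars (fst e) = vars (snd e)"

definition satisfies :: "('a, 'f) alg \<Rightarrow> 'f identity \<Rightarrow> bool" where
  "satisfies A e \<longleftrightarrow>
     (\<forall>h. (\<forall>x. h x \<in> carrier A) \<longrightarrow> eval (ops A) h (fst e) = eval (ops A) h (snd e))"

text \<open>A variety (equational class): the class of all algebras satisfying a set E of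
  identities. Classes are represented as predicates on algebras with carriers in 'a.\<close>
definition is_variety :: "('f \<Rightarrow> nat) \<Rightarrow> (('a, 'f) alg \<Rightarrow> bool) \<Rightarrow> bool" where
  "is_variety arity V \<longleftrightarrow> (\<exists>E. (\<forall>e\<in>E. wf_identity arity e) \<and>
     (\<forall>B. V B \<longleftrightarrow> is_algebra arity B \<and> (\<forall>e\<in>E. satisfies B e)))"

definition holds_in :: "(('a, 'f) alg \<Rightarrow> bool) \<Rightarrow> 'f identity \<Rightarrow> bool" where
  "holds_in V e \<longleftrightarrow> (\<forall>B. V B \<longrightarrow> satisfies B e)"

definition is_congruence :: "('f \<Rightarrow> nat) \<Rightarrow> ('a, 'f) alg \<Rightarrow> ('a \<times> 'a) set \<Rightarrow> bool" where
  "is_congruence arity A \<theta> \<longleftrightarrow> equiv (carrier A) \<theta> \<and>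
     (\<forall>f xs ys. length xs = arity f \<and> length ys = arity f \<and>
        set xs \<subseteq> carrier A \<and> set ys \<subseteq> carrier A \<and>
        list_all2 (\<lambda>x y. (x, y) \<in> \<theta>) xs ys \<longrightarrow> (ops A f xs, ops A f ys) \<in> \<theta>)"

definition quot_alg :: "('a, 'f) alg \<Rightarrow> ('a \<times> 'a) set \<Rightarrow> ('a set, 'f) alg" where
  "quot_alg A \<theta> = \<lparr>carrier = carrier A // \<theta>,
     ops = (\<lambda>f Cs. \<theta> `` {ops A f (map (\<lambda>C. SOME x. x \<in> C) Cs)})\<rparr>"

definition in_S :: "('f \<Rightarrow> nat) \<Rightarrow> ('b, 'f) alg \<Rightarrow> bool" where
  "in_S arity B \<longleftrightarrow> is_algebra arity B \<and>
     (\<forall>e. wf_identity arity e \<and> regular e \<longrightarrow> satisfies B e)"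

definition class_alg :: "('a, 'f) alg \<Rightarrow> ('a \<times> 'a) set \<Rightarrow> 'a \<Rightarrow> ('a, 'f) alg" where
  "class_alg A \<theta> a = \<lparr>carrier = \<theta> `` {a}, ops = ops A\<rparr>"

definition in_maltsev_S :: "('f \<Rightarrow> nat) \<Rightarrow> (('a, 'f) alg \<Rightarrow> bool) \<Rightarrow> ('a, 'f) alg \<Rightarrow> bool" where
  "in_maltsev_S arity V A \<longleftrightarrow> is_algebra arity A \<and>
     (\<exists>\<theta>. is_congruence arity A \<theta> \<and> in_S arity (quot_alg A \<theta>) \<and>
        (\<forall>a\<in>carrier A. V (class_alg A \<theta> a)))"

definition T :: "('f \<Rightarrow> nat) \<Rightarrow> nat \<Rightarrow> ('f, nat) trm set" where
  "T arity m = {t. wf_trm arity t \<and> vars t = {1..m}}"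

text \<open>For sigma = (u,v) with variables among y_1..y_n (n given).\<close>
definition sigma_p_m :: "('f \<Rightarrow> nat) \<Rightarrow> nat \<Rightarrow> 'f identity \<Rightarrow> nat \<Rightarrow> 'f identity set" where
  "sigma_p_m arity n \<sigma> m = {(subst r (fst \<sigma>), subst r (snd \<sigma>)) | r.
      \<forall>i\<in>{1..n}. r i \<in> T arity m}"

definition sigma_p :: "('f \<Rightarrow> nat) \<Rightarrow> nat \<Rightarrow> 'f identity \<Rightarrow> 'f identity set" where
  "sigma_p arity n \<sigma> = (\<Union>m\<in>{m. m > 0}. sigma_p_m arity n \<sigma> m)"

end

theory Submission
  imports Defs
begin

lemma eval_closed:
  assumes "is_algebra arity A" "\<forall>x. h x \<in> carrier A"
  shows "wf_trm arity t \<Longrightarrow> eval (ops A) h t \<in> carrier A"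
proof (induction t)
  case (Var x) then show ?case using assms by simp
next
  case (Fn f ts)
  then have "set (map (eval (ops A) h) ts) \<subseteq> carrier A" by auto
  then show ?case using assms(1) Fn.prems unfolding is_algebra_def by auto
qed

lemma eval_subst: "eval op h (subst r t) = eval op (\<lambda>x. eval op h (r x)) t"
  by (induction t) (auto cong: map_cong)

lemma eval_cong: "\<forall>x\<in>vars t. h x = h' x \<Longrightarrow> eval op h t = eval op h' t"
  by (induction t) (auto cong: map_cong)

lemma eval_quot:
  assumes cg: "is_congruence arity A \<theta>" and alg: "is_algebra arity A"
    and h: "\<forall>x. h x \<in> carrier A"
  shows "wf_trm arity t \<Longrightarrow> eval (ops (quot_alg A \<theta>)) (\<lambda>x. \<theta> `` {h x}) t = \<theta> `` {eval (ops A) h t}"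
proof (induction t)
  case (Var x) then show ?case by (simp add: quot_alg_def)
next
  case (Fn f ts)
  have eq: "equiv (carrier A) \<theta>" using cg unfolding is_congruence_def by blast
  have IH: "map (eval (ops (quot_alg A \<theta>)) (\<lambda>x. \<theta> `` {h x})) ts = map (\<lambda>t. \<theta> `` {eval (ops A) h t}) ts"
    using Fn by auto
  define ys where "ys = map (eval (ops A) h) ts"
  define xs where "xs = map (\<lambda>y. SOME x. x \<in> \<theta> `` {y}) ys"
  have yc: "set ys \<subseteq> carrier A" using Fn.prems eval_closed[OF alg h] unfolding ys_def by auto
  have rel: "(y, SOME x. x \<in> \<theta> `` {y}) \<in> \<theta>" if "y \<in> carrier A" for y
  proof -
    have "y \<in> \<theta> `` {y}" using eq that unfolding equiv_def refl_on_def by blast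
    then have "(SOME x. x \<in> \<theta> `` {y}) \<in> \<theta> `` {y}" by (rule someI)
    then show ?thesis by simp
  qed
  have xc: "set xs \<subseteq> carrier A"
    using rel yc eq unfolding xs_def equiv_def refl_on_def by auto
  have la: "list_all2 (\<lambda>x y. (x, y) \<in> \<theta>) ys xs"
    unfolding xs_def list_all2_conv_all_nth using rel yc by (auto simp: subset_iff)
  have len: "length ys = arity f" "length xs = arity f" using Fn.prems unfolding ys_def xs_def by auto
  have "(ops A f ys, ops A f xs) \<in> \<theta>"
    using cg len yc xc la unfolding is_congruence_def by blast
  then have "\<theta> `` {ops A f xs} = \<theta> `` {ops A f ys}"
    using eq by (metis equiv_class_eq_iff)
  moreover have "map (\<lambda>C. SOME x. x \<in> C) (map (\<lambda>t. \<theta> `` {eval (ops A) h t}) ts) = xs"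
    unfolding xs_def ys_def by simp
  ultimately have "\<theta> `` {ops A f (map (\<lambda>C. SOME x. x \<in> C) (map (eval (ops (quot_alg A \<theta>)) (\<lambda>x. \<theta> `` {h x})) ts))} = \<theta> `` {ops A f ys}"
    by (simp only: IH)
  then show ?case unfolding ys_def by (simp add: quot_alg_def)
qed

theorem lemma2p6:
  fixes arity :: "'f \<Rightarrow> nat"
    and V :: "('a, 'f) alg \<Rightarrow> bool"
    and \<sigma> :: "'f identity"
    and n :: nat
    and A :: "('a, 'f) alg"
  assumes "plural arity"
    and "is_variety arity V"
    and "wf_identity arity \<sigma>"
    and "vars (fst \<sigma>) \<union> vars (snd \<sigma>) \<subseteq> {1..n}"
    and "holds_in V \<sigma>"
    and "in_maltsev_S arity V A"
  shows "\<forall>e\<in>sigma_p arity n \<sigma>. satisfies A e"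
proof (intro ballI)
  fix e assume "e \<in> sigma_p arity n \<sigma>"
  then obtain m r where m: "m > 0" and r: "\<forall>i\<in>{1..n}. r i \<in> T arity m"
    and e: "e = (subst r (fst \<sigma>), subst r (snd \<sigma>))"
    unfolding sigma_p_def sigma_p_m_def by blast
  obtain \<theta> where alg: "is_algebra arity A" and cg: "is_congruence arity A \<theta>"
    and S: "in_S arity (quot_alg A \<theta>)" and cls: "\<forall>a\<in>carrier A. V (class_alg A \<theta> a)"
    using assms(6) unfolding in_maltsev_S_def by blast
  have eq: "equiv (carrier A) \<theta>" using cg unfolding is_congruence_def by blast
  show "satisfies A e" unfolding satisfies_def
  proof (intro allI impI)
    fix h :: "nat \<Rightarrow> 'a" assume h: "\<forall>x. h x \<in> carrier A"
    define a where "a = (if n \<ge> 1 then eval (ops A) h (r 1) else h 0)"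
    have ac: "a \<in> carrier A" unfolding a_def using eval_closed[OF alg h] r h
      by (auto simp: T_def)
    have hq: "\<forall>x. \<theta> `` {h x} \<in> carrier (quot_alg A \<theta>)"
      using h by (simp add: quot_alg_def quotientI)
    have rel: "(a, eval (ops A) h (r i)) \<in> \<theta>" if i: "i \<in> {1..n}" for i
    proof -
      have n1: "n \<ge> 1" "1 \<in> {1..n}" using i by auto
      have wf: "wf_trm arity (r i)" "wf_trm arity (r 1)" "vars (r i) = vars (r 1)"
        using r i n1 by (auto simp: T_def)
      have "satisfies (quot_alg A \<theta>) (r 1, r i)"
        using S wf unfolding in_S_def wf_identity_def regular_def by auto
      then have "eval (ops (quot_alg A \<theta>)) (\<lambda>x. \<theta> `` {h x}) (r 1) =
                 eval (ops (quot_alg A \<theta>)) (\<lambda>x. \<theta> `` {h x}) (r i)"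
        using hq unfolding satisfies_def by auto
      then have "\<theta> `` {eval (ops A) h (r 1)} = \<theta> `` {eval (ops A) h (r i)}"
        using eval_quot[OF cg alg h] wf by simp
      moreover have "eval (ops A) h (r 1) \<in> carrier A" "eval (ops A) h (r i) \<in> carrier A"
        using eval_closed[OF alg h] wf by auto
      ultimately show ?thesis using eq n1 unfolding a_def by (simp add: equiv_class_eq_iff)
    qed
    define h' where "h' = (\<lambda>i. if i \<in> {1..n} then eval (ops A) h (r i) else a)"
    have aa: "(a, a) \<in> \<theta>" using eq ac unfolding equiv_def refl_on_def by blast
    have h'c: "\<forall>x. h' x \<in> carrier (class_alg A \<theta> a)"
      using rel aa unfolding h'_def class_alg_def by auto
    have "satisfies (class_alg A \<theta> a) \<sigma>" using assms(5) cls ac unfolding holds_in_def by blast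
    then have E: "eval (ops A) h' (fst \<sigma>) = eval (ops A) h' (snd \<sigma>)"
      using h'c unfolding satisfies_def by (simp add: class_alg_def)
    have 1: "eval (ops A) h' (fst \<sigma>) = eval (ops A) (\<lambda>x. eval (ops A) h (r x)) (fst \<sigma>)"
      by (rule eval_cong) (use assms(4) in \<open>auto simp: h'_def\<close>)
    have 2: "eval (ops A) h' (snd \<sigma>) = eval (ops A) (\<lambda>x. eval (ops A) h (r x)) (snd \<sigma>)"
      by (rule eval_cong) (use assms(4) in \<open>auto simp: h'_def\<close>)
    show "eval (ops A) h (fst e) = eval (ops A) h (snd e)"
      using E 1 2 by (simp add: e eval_subst)
  qed
qed

end
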